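(* Let $r\ge2$, $N\ge r-1$, $d\ge1$ be integers. For any almost $r$-injective function $f\colon\Delta_N\to\mathbb{R}^d$, we have $$\delta(f)\ge\sqrt{2}\cdot\sin\big(\alpha^{(r)}(f)/2\big)\cdot\kappa^{(r)}(f).$$
   Context: $\Delta_N$ is the geometric $N$-simplex. $f$ is almost $r$-injective if for any $r$ pairwise disjoint faces $\sigma_1,\dots,\sigma_r$ of $\Delta_N$, $f(\sigma_1)\cap\dots\cap f(\sigma_r)=\emptyset$. $\mathrm{Conf}_r^{\Delta}(\Delta_N)=\{(x_1,\dots,x_r)\in(\Delta_N)^{\times r}: \text{the } x_i \text{ lie in pairwise disjoint faces}\}$ with the subspace topology. $W_r^{\oplus d}=\{(z_1,\dots,z_r)\in(\mathbb{R}^d)^{\oplus r}: \sum z_i=0\}$, $S(W_r^{\oplus d})$ its unit sphere with geodesic metric $d(u,v)=\arccos\langle u,v\rangle$, $\nu(v)=v/\|v\|$. $\mathrm{Conf}_r^{\Delta}(f)(x_1,\dots,x_r)=\big(f(x_i)-\tfrac1r\sum_jf(x_j)\big)_{i=1}^r$, and $\alpha^{(r)}(f)=\delta(\nu\circ\mathrm{Conf}_r^{\Delta}(f))$. $\kappa^{(r)}(f)=\inf_{(x_1,\dots,x_r)\in\mathrm{Conf}_r^{\Delta}(\Delta_N)}\frac1r\sqrt{\sum_{i,j=1}^r\|f(x_i)-f(x_j)\|^2}$. For a topological space $X$ and metric space $Y$, $\delta(h)=\inf\{\delta\ge 0 : \text{for every } x\in X \text{ there is an open neighborhood } U_x \text{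 with } \operatorname{diam}(h(U_x))\le\delta\}$; $\delta(f)$ uses the Euclidean metric on $\mathbb{R}^d$. *)

theory Defs
  imports "HOL-Analysis.Analysis"
begin

text \<open>Geometric N-simplex, realised in R^(N+1) as functions nat => real supported on {0..N}
  (the product topology on nat => real restricts to the Euclidean topology here).\<close>
definition Delta :: "nat \<Rightarrow> (nat \<Rightarrow> real) set" where
  "Delta N = {x. (\<forall>i. N < i \<longrightarrow> x i = 0) \<and> (\<forall>i\<le>N. 0 \<le> x i) \<and> (\<Sum>i\<le>N. x i) = 1}"

definition sface :: "nat \<Rightarrow> nat set \<Rightarrow> (nat \<Rightarrow> real) set" where
  "sface N T = {x \<in> Delta N. \<forall>i. i \<notin> T \<longrightarrow> x i = 0}"

definition is_face_index :: "nat \<Rightarrow> nat set \<Rightarrow> bool" where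
  "is_face_index N T \<longleftrightarrow> T \<noteq> {} \<and> T \<subseteq> {..N}"

definition almost_r_injective :: "nat \<Rightarrow> nat \<Rightarrow> ((nat \<Rightarrow> real) \<Rightarrow> 'a) \<Rightarrow> bool" where
  "almost_r_injective r N f \<longleftrightarrow>
     (\<forall>\<sigma> :: nat \<Rightarrow> nat set.
        (\<forall>i<r. is_face_index N (\<sigma> i)) \<and> (\<forall>i<r. \<forall>j<r. i \<noteq> j \<longrightarrow> \<sigma> i \<inter> \<sigma> j = {})
        \<longrightarrow> (\<Inter>i\<in>{..<r}. f ` sface N (\<sigma> i)) = {})"

text \<open>Conf_r^Delta(Delta_N): r-tuples (x_0..x_{r-1}) encoded as functions nat => point,
  with the unused coordinates i >= r fixed to 0; subspace of the product topology.\<close>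
definition conf_simplex :: "nat \<Rightarrow> nat \<Rightarrow> (nat \<Rightarrow> (nat \<Rightarrow> real)) set" where
  "conf_simplex r N = {x. (\<forall>i. r \<le> i \<longrightarrow> x i = (\<lambda>_. 0)) \<and>
     (\<exists>\<sigma> :: nat \<Rightarrow> nat set. (\<forall>i<r. is_face_index N (\<sigma> i) \<and> x i \<in> sface N (\<sigma> i)) \<and>
        (\<forall>i<r. \<forall>j<r. i \<noteq> j \<longrightarrow> \<sigma> i \<inter> \<sigma> j = {}))}"

definition diamE :: "('b \<Rightarrow> 'b \<Rightarrow> real) \<Rightarrow> 'b set \<Rightarrow> ereal" where
  "diamE dm S = Sup {ereal (dm a b) | a b. a \<in> S \<and> b \<in> S}"

definition delta_gen :: "'c topology \<Rightarrow> ('b \<Rightarrow> 'b \<Rightarrow> real) \<Rightarrow> ('c \<Rightarrow> 'b) \<Rightarrow> ereal" where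
  "delta_gen X dm h = Inf {\<delta>. 0 \<le> \<delta> \<and>
     (\<forall>x\<in>topspace X. \<exists>U. openin X U \<and> x \<in> U \<and> diamE dm (h ` U) \<le> \<delta>)}"

definition delta_fun :: "nat \<Rightarrow> ((nat \<Rightarrow> real) \<Rightarrow> 'a::euclidean_space) \<Rightarrow> ereal" where
  "delta_fun N f = delta_gen (top_of_set (Delta N)) dist f"

text \<open>Elements of W_r^{(+)d} as functions nat => R^d (only i < r matter).
  Inner product and norm of the direct sum.\<close>
definition inner_W :: "nat \<Rightarrow> (nat \<Rightarrow> 'a::euclidean_space) \<Rightarrow> (nat \<Rightarrow> 'a) \<Rightarrow> real" where
  "inner_W r u v = (\<Sum>i<r. inner (u i) (v i))"

definition norm_W :: "nat \<Rightarrow> (nat \<Rightarrow> 'a::euclidean_space) \<Rightarrow> real" where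
  "norm_W r v = sqrt (inner_W r v v)"

definition geodist :: "nat \<Rightarrow> (nat \<Rightarrow> 'a::euclidean_space) \<Rightarrow> (nat \<Rightarrow> 'a) \<Rightarrow> real" where
  "geodist r u v = arccos (inner_W r u v)"

definition nu_W :: "nat \<Rightarrow> (nat \<Rightarrow> 'a::euclidean_space) \<Rightarrow> (nat \<Rightarrow> 'a)" where
  "nu_W r v = (\<lambda>i. v i /\<^sub>R norm_W r v)"

definition conf_map :: "nat \<Rightarrow> ((nat \<Rightarrow> real) \<Rightarrow> 'a::euclidean_space) \<Rightarrow>
    (nat \<Rightarrow> (nat \<Rightarrow> real)) \<Rightarrow> (nat \<Rightarrow> 'a)" where
  "conf_map r f x = (\<lambda>i. if i < r then f (x i) - (1 / real r) *\<^sub>R (\<Sum>j<r. f (x j)) else 0)"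

text \<open>alpha^(r)(f); it is finite (at most pi) when f is almost r-injective.\<close>
definition alpha_r :: "nat \<Rightarrow> nat \<Rightarrow> ((nat \<Rightarrow> real) \<Rightarrow> 'a::euclidean_space) \<Rightarrow> real" where
  "alpha_r r N f = real_of_ereal
     (delta_gen (top_of_set (conf_simplex r N)) (geodist r) (nu_W r \<circ> conf_map r f))"

definition kappa_r :: "nat \<Rightarrow> nat \<Rightarrow> ((nat \<Rightarrow> real) \<Rightarrow> 'a::euclidean_space) \<Rightarrow> real" where
  "kappa_r r N f = Inf ((\<lambda>x. (1 / real r) *
      sqrt (\<Sum>i<r. \<Sum>j<r. (norm (f (x i) - f (x j)))\<^sup>2)) ` conf_simplex r N)"

end

theory Submission
  imports Defs
begin

lemma centered_sq:
  fixes a :: "nat \<Rightarrow> 'a::real_inner" assumes "0 < r"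
  shows "(\<Sum>i<r. (norm (a i - (1/real r) *\<^sub>R (\<Sum>j<r. a j)))\<^sup>2)
       = (\<Sum>i<r. (norm (a i))\<^sup>2) - (norm (\<Sum>j<r. a j))\<^sup>2 / real r"
proof -
  define S where "S = (\<Sum>j<r. a j)"
  define c where "c = (1/real r) *\<^sub>R S"
  have e: "(norm (a i - c))\<^sup>2 = (norm (a i))\<^sup>2 - 2 * inner (a i) c + (norm c)\<^sup>2" for i
    by (simp add: power2_norm_eq_inner inner_diff_left inner_diff_right inner_commute)
  have "(\<Sum>i<r. (norm (a i - c))\<^sup>2) = (\<Sum>i<r. (norm (a i))\<^sup>2) - 2 * inner S c + real r * (norm c)\<^sup>2"
    by (simp add: e sum.distrib sum_subtractf S_def inner_sum_left sum_distrib_left)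
  also have "inner S c = (norm S)\<^sup>2 / real r"
    by (simp add: c_def power2_norm_eq_inner)
  also have "real r * (norm c)\<^sup>2 = (norm S)\<^sup>2 / real r"
    using assms by (simp add: c_def power2_eq_square field_simps)
  finally show ?thesis by (simp add: S_def c_def)
qed

lemma pair_sq:
  fixes a :: "nat \<Rightarrow> 'a::real_inner"
  shows "(\<Sum>i<r. \<Sum>j<r. (norm (a i - a j))\<^sup>2)
       = 2 * real r * (\<Sum>i<r. (norm (a i))\<^sup>2) - 2 * (norm (\<Sum>j<r. a j))\<^sup>2"
proof -
  have e: "(norm (a i - a j))\<^sup>2 = (norm (a i))\<^sup>2 + (norm (a j))\<^sup>2 - 2 * inner (a i) (a j)" for i j
    by (simp add: power2_norm_eq_inner inner_diff_left inner_diff_right inner_commute)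
  have s: "(\<Sum>i<r. \<Sum>j<r. inner (a i) (a j)) = (norm (\<Sum>j<r. a j))\<^sup>2"
    by (simp add: power2_norm_eq_inner inner_sum_left inner_sum_right) (rule sum.swap)
  show ?thesis
    by (simp add: e sum.distrib sum_subtractf s[symmetric] sum_distrib_left mult.assoc)
qed

lemma inner_W_diff:
  "inner_W r (\<lambda>i. u i - v i) (\<lambda>i. u i - v i) = inner_W r u u + inner_W r v v - 2 * inner_W r u v"
  unfolding inner_W_def
  by (simp add: inner_diff_left inner_diff_right sum.distrib sum_subtractf inner_commute sum_distrib_left)

lemma inner_W_scale:
  "inner_W r (\<lambda>i. u i /\<^sub>R a) (\<lambda>i. v i /\<^sub>R b) = inner_W r u v / (a * b)"
  unfolding inner_W_def by (simp add: sum_divide_distrib) (intro sum.cong; simp add: field_simps)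

lemma inner_W_sq: "inner_W r u u = (\<Sum>i<r. (norm (u i))\<^sup>2)"
  unfolding inner_W_def by (simp add: power2_norm_eq_inner)

lemma inner_W_nonneg: "0 \<le> inner_W r u u"
  unfolding inner_W_sq by (simp add: sum_nonneg)

lemma norm_W_L2: "norm_W r u = L2_set (\<lambda>i. norm (u i)) {..<r}"
  unfolding norm_W_def inner_W_sq L2_set_def by simp

lemma inner_W_CS: "\<bar>inner_W r u v\<bar> \<le> norm_W r u * norm_W r v"
proof -
  have "\<bar>inner_W r u v\<bar> \<le> (\<Sum>i<r. \<bar>inner (u i) (v i)\<bar>)"
    unfolding inner_W_def by (rule sum_abs)
  also have "\<dots> \<le> (\<Sum>i<r. \<bar>norm (u i)\<bar> * \<bar>norm (v i)\<bar>)"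
    by (intro sum_mono) (simp add: Cauchy_Schwarz_ineq2)
  also have "\<dots> \<le> norm_W r u * norm_W r v"
    unfolding norm_W_L2 by (rule L2_set_mult_ineq)
  finally show ?thesis .
qed

lemma centered_le:
  fixes a :: "nat \<Rightarrow> 'a::real_inner" assumes "0 < r"
  shows "(\<Sum>i<r. (norm (a i - (1/real r) *\<^sub>R (\<Sum>j<r. a j)))\<^sup>2) \<le> (\<Sum>i<r. (norm (a i))\<^sup>2)"
  using centered_sq[OF assms, of a] assms by simp

lemma centered_pair:
  fixes a :: "nat \<Rightarrow> 'a::real_inner" assumes "0 < r"
  shows "(\<Sum>i<r. (norm (a i - (1/real r) *\<^sub>R (\<Sum>j<r. a j)))\<^sup>2)
     = (\<Sum>i<r. \<Sum>j<r. (norm (a i - a j))\<^sup>2) / (2 * real r)"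
  using centered_sq[OF assms, of a] pair_sq[where r=r and a=a] assms by (simp add: field_simps)

lemma pair_bound:
  fixes a b :: "nat \<Rightarrow> 'a::euclidean_space" and r :: nat and k d :: real
  assumes r: "0 < r" and k: "0 < k" and d: "0 \<le> d"
    and ka: "real r * k \<le> sqrt (\<Sum>i<r. \<Sum>j<r. (norm (a i - a j))\<^sup>2)"
    and kb: "real r * k \<le> sqrt (\<Sum>i<r. \<Sum>j<r. (norm (b i - b j))\<^sup>2)"
    and ab: "\<And>i. i < r \<Longrightarrow> norm (a i - b i) \<le> d"
    and P: "P = (\<lambda>i. if i < r then a i - (1/real r) *\<^sub>R (\<Sum>j<r. a j) else 0)"
    and Q: "Q = (\<lambda>i. if i < r then b i - (1/real r) *\<^sub>R (\<Sum>j<r. b j) else 0)"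
  shows "geodist r (nu_W r P) (nu_W r Q) \<le> arccos (max (-1) (1 - d\<^sup>2 / k\<^sup>2))"
proof -
  have sqP: "inner_W r P P = (\<Sum>i<r. \<Sum>j<r. (norm (a i - a j))\<^sup>2) / (2 * real r)"
    unfolding inner_W_sq P using centered_pair[OF r, of a] by simp
  have sqQ: "inner_W r Q Q = (\<Sum>i<r. \<Sum>j<r. (norm (b i - b j))\<^sup>2) / (2 * real r)"
    unfolding inner_W_sq Q using centered_pair[OF r, of b] by simp
  have sa: "(real r * k)\<^sup>2 \<le> (\<Sum>i<r. \<Sum>j<r. (norm (a i - a j))\<^sup>2)"
    using ka k r by (metis (no_types, lifting) mult_pos_pos of_nat_0_less_iff power_mono
        real_sqrt_pow2 sum_nonneg zero_le_power2 less_imp_le)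
  have sb: "(real r * k)\<^sup>2 \<le> (\<Sum>i<r. \<Sum>j<r. (norm (b i - b j))\<^sup>2)"
    using kb k r by (metis (no_types, lifting) mult_pos_pos of_nat_0_less_iff power_mono
        real_sqrt_pow2 sum_nonneg zero_le_power2 less_imp_le)
  define m where "m = real r * k\<^sup>2 / 2"
  have m: "0 < m" using r k by (simp add: m_def)
  have mP: "m \<le> inner_W r P P"
    unfolding sqP m_def using sa r by (simp add: field_simps power2_eq_square)
  have mQ: "m \<le> inner_W r Q Q"
    unfolding sqQ m_def using sb r by (simp add: field_simps power2_eq_square)
  define nP where "nP = norm_W r P"
  define nQ where "nQ = norm_W r Q"
  have nP2: "nP\<^sup>2 = inner_W r P P" unfolding nP_def norm_W_def using inner_W_nonneg by simp
  have nQ2: "nQ\<^sup>2 = inner_W r Q Q" unfolding nQ_def norm_W_def using inner_W_nonneg by simp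
  have nP0: "0 \<le> nP" "0 \<le> nQ" unfolding nP_def nQ_def norm_W_def by (simp_all add: inner_W_nonneg)
  have "m * m \<le> nP\<^sup>2 * nQ\<^sup>2" using mP mQ m nP2 nQ2 by (simp add: mult_mono)
  hence mm: "m \<le> nP * nQ"
    using m nP0 by (metis power2_eq_square power_mult_distrib power2_le_imp_le mult_nonneg_nonneg)
  have pos: "0 < nP * nQ" using m mm by linarith
  have diff: "inner_W r (\<lambda>i. P i - Q i) (\<lambda>i. P i - Q i) \<le> real r * d\<^sup>2"
  proof -
    have "inner_W r (\<lambda>i. P i - Q i) (\<lambda>i. P i - Q i)
        = (\<Sum>i<r. (norm ((a i - b i) - (1/real r) *\<^sub>R (\<Sum>j<r. a j - b j)))\<^sup>2)"
      unfolding inner_W_sq P Q by (intro sum.cong) (auto simp: sum_subtractf algebra_simps)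
    also have "\<dots> \<le> (\<Sum>i<r. (norm (a i - b i))\<^sup>2)"
      using centered_le[OF r, of "\<lambda>i. a i - b i"] by simp
    also have "\<dots> \<le> (\<Sum>i<r. d\<^sup>2)"
      by (intro sum_mono power_mono ab) auto
    finally show ?thesis by simp
  qed
  define t where "t = inner_W r (nu_W r P) (nu_W r Q)"
  have t: "t = inner_W r P Q / (nP * nQ)"
    unfolding t_def nu_W_def nP_def nQ_def by (rule inner_W_scale)
  have cs: "\<bar>inner_W r P Q\<bar> \<le> nP * nQ" unfolding nP_def nQ_def by (rule inner_W_CS)
  have t1: "-1 \<le> t" "t \<le> 1" using cs pos unfolding t by (auto simp: abs_le_iff field_simps)
  have "nP * nQ * (2 - 2 * t) = 2 * (nP * nQ) - 2 * inner_W r P Q"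
    using pos unfolding t by (simp add: field_simps) (use pos in force)
  also have "\<dots> \<le> nP\<^sup>2 + nQ\<^sup>2 - 2 * inner_W r P Q"
    using sum_squares_bound[of nP nQ] by (simp add: power2_eq_square algebra_simps)
  also have "\<dots> \<le> real r * d\<^sup>2" using diff inner_W_diff[of r P Q] nP2 nQ2 by simp
  finally have A: "nP * nQ * (2 - 2 * t) \<le> real r * d\<^sup>2" .
  have "1 - d\<^sup>2 / k\<^sup>2 \<le> t"
  proof (rule ccontr)
    assume "\<not> ?thesis"
    hence "2 - 2 * t > 2 * d\<^sup>2 / k\<^sup>2" by (simp add: field_simps)
    hence "m * (2 - 2 * t) > m * (2 * d\<^sup>2 / k\<^sup>2)" using m by (intro mult_strict_left_mono)
    moreover have "m * (2 * d\<^sup>2 / k\<^sup>2) = real r * d\<^sup>2" using k by (simp add: m_def field_simps)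
    moreover have "m * (2 - 2 * t) \<le> nP * nQ * (2 - 2 * t)"
      using mm t1 by (intro mult_right_mono) auto
    ultimately show False using A by linarith
  qed
  hence "max (-1) (1 - d\<^sup>2 / k\<^sup>2) \<le> t" using t1 by simp
  hence "arccos t \<le> arccos (max (-1) (1 - d\<^sup>2 / k\<^sup>2))"
    using t1 by (intro arccos_le_arccos) auto
  thus ?thesis unfolding geodist_def t_def .
qed

lemma conf_Delta: "x \<in> conf_simplex r N \<Longrightarrow> i < r \<Longrightarrow> x i \<in> Delta N"
  unfolding conf_simplex_def sface_def by auto

lemma conf_ne:
  assumes "r \<le> N + 1"
  shows "conf_simplex r N \<noteq> {}"
proof -
  define x :: "nat \<Rightarrow> nat \<Rightarrow> real" where
    "x = (\<lambda>i. if i < r then (\<lambda>k. if k = i then 1 else 0) else (\<lambda>_. 0))"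
  have "x \<in> conf_simplex r N"
    unfolding conf_simplex_def
  proof (intro CollectI conjI allI impI exI[where x="\<lambda>i. {i}"])
    fix i assume i: "i < r"
    then have iN: "i \<le> N" using assms by simp
    show "is_face_index N {i}" using iN by (simp add: is_face_index_def)
    have "(\<Sum>k\<le>N. (if k = i then 1 else 0 :: real)) = 1" using iN by simp
    then show "x i \<in> sface N {i}"
      using i iN by (auto simp: x_def sface_def Delta_def)
  qed (auto simp: x_def)
  thus ?thesis by blast
qed

theorem theorem4p13:
  fixes r N :: nat and f :: "(nat \<Rightarrow> real) \<Rightarrow> 'a::euclidean_space"
  assumes "2 \<le> r" and "r \<le> N + 1"
    and "almost_r_injective r N f"
  shows "delta_fun N f \<ge> ereal (sqrt 2 * sin (alpha_r r N f / 2) * kappa_r r N f)"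
proof -
  have r0: "0 < r" using assms by simp
  define D where "D = {\<delta>. 0 \<le> \<delta> \<and> (\<forall>x\<in>topspace (top_of_set (Delta N)).
     \<exists>U. openin (top_of_set (Delta N)) U \<and> x \<in> U \<and> diamE dist (f ` U) \<le> \<delta>)}"
  have dD: "delta_fun N f = Inf D" unfolding delta_fun_def delta_gen_def D_def by simp
  define g where "g = (\<lambda>x. (1 / real r) * sqrt (\<Sum>i<r. \<Sum>j<r. (norm (f (x i) - f (x j)))\<^sup>2))"
  have kdef: "kappa_r r N f = Inf (g ` conf_simplex r N)"
    unfolding kappa_r_def g_def by simp
  have g0: "0 \<le> g x" for x unfolding g_def by (simp add: sum_nonneg)
  have kappa0: "0 \<le> kappa_r r N f"
    unfolding kdef using conf_ne[OF assms(2)] g0 by (intro cInf_greatest) auto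
  have kappa_le: "kappa_r r N f \<le> g x" if "x \<in> conf_simplex r N" for x
    unfolding kdef using that g0 by (intro cInf_lower) (auto intro: bdd_belowI[where m=0])
  define \<kappa> where "\<kappa> = kappa_r r N f"
  define \<alpha> where "\<alpha> = alpha_r r N f"
  define R where "R = sqrt 2 * sin (\<alpha> / 2) * \<kappa>"
  have "ereal R \<le> Inf D"
  proof (rule Inf_greatest)
    fix \<delta> assume "\<delta> \<in> D"
    then have \<delta>0: "0 \<le> \<delta>" and adm: "\<And>x. x \<in> Delta N \<Longrightarrow>
       \<exists>U. openin (top_of_set (Delta N)) U \<and> x \<in> U \<and> diamE dist (f ` U) \<le> \<delta>"
      unfolding D_def by auto
    show "ereal R \<le> \<delta>"
    proof (cases \<delta>)
      case PInf then show ?thesis by simp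
    next
      case MInf then show ?thesis using \<delta>0 by simp
    next
      case (real d)
      have d0: "0 \<le> d" using \<delta>0 real by simp
      show ?thesis
      proof (cases "R \<le> 0")
        case True then show ?thesis using real d0 by simp
      next
        case False
        have k: "0 < \<kappa>" using False kappa0 unfolding R_def \<kappa>_def
          by (metis less_eq_real_def mult_zero_right not_le)
        define \<theta> where "\<theta> = arccos (max (-1) (1 - d\<^sup>2 / \<kappa>\<^sup>2))"
        have mx: "-1 \<le> max (-1) (1 - d\<^sup>2 / \<kappa>\<^sup>2)" "max (-1) (1 - d\<^sup>2 / \<kappa>\<^sup>2) \<le> 1"
          using k by auto
        have th0: "0 \<le> \<theta>" and thpi: "\<theta> \<le> pi"
          unfolding \<theta>_def using mx by (auto intro: arccos_lbound arccos_ubound)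
        have nb: "\<exists>V. openin (top_of_set (conf_simplex r N)) V \<and> x \<in> V \<and>
            diamE (geodist r) ((nu_W r \<circ> conf_map r f) ` V) \<le> ereal \<theta>"
          if x: "x \<in> conf_simplex r N" for x
        proof -
          have "\<forall>i. \<exists>Op. i < r \<longrightarrow> open Op \<and> x i \<in> Op \<and>
              (\<forall>p\<in>Delta N \<inter> Op. \<forall>q\<in>Delta N \<inter> Op. dist (f p) (f q) \<le> d)"
          proof
            fix i
            show "\<exists>Op. i < r \<longrightarrow> open Op \<and> x i \<in> Op \<and>
              (\<forall>p\<in>Delta N \<inter> Op. \<forall>q\<in>Delta N \<inter> Op. dist (f p) (f q) \<le> d)"
            proof (cases "i < r")
              case True
              then have "x i \<in> Delta N" using conf_Delta x by blast
              then obtain U where U: "openin (top_of_set (Delta N)) U" "x i \<in> U"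
                "diamE dist (f ` U) \<le> ereal d" using adm real by blast
              then obtain T where T: "open T" "U = Delta N \<inter> T"
                by (auto simp: openin_open)
              have "dist (f p) (f q) \<le> d" if "p \<in> U" "q \<in> U" for p q
              proof -
                have "ereal (dist (f p) (f q)) \<le> diamE dist (f ` U)"
                  unfolding diamE_def using that by (intro Sup_upper) blast
                then show ?thesis using U(3) by (metis ereal_less_eq(3) order_trans)
              qed
              then show ?thesis using T U by (intro exI[where x=T]) auto
            qed simp
          qed
          then obtain Op where Op: "\<And>i. i < r \<Longrightarrow> open (Op i) \<and> x i \<in> Op i \<and>
              (\<forall>p\<in>Delta N \<inter> Op i. \<forall>q\<in>Delta N \<inter> Op i. dist (f p) (f q) \<le> d)"
            by metis
          define V where "V = conf_simplex r N \<inter> (\<Inter>i\<in>{..<r}. (\<lambda>y. y i) -` Op i)"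
          have "openin (top_of_set (conf_simplex r N)) V"
            unfolding openin_open V_def
            by (intro exI[where x="\<Inter>i\<in>{..<r}. (\<lambda>y. y i) -` Op i"] conjI refl open_INT ballI
                open_vimage) (auto simp: Op)
          moreover have "x \<in> V" using x Op unfolding V_def by auto
          moreover have "diamE (geodist r) ((nu_W r \<circ> conf_map r f) ` V) \<le> ereal \<theta>"
            unfolding diamE_def
          proof (rule Sup_least)
            fix e assume "e \<in> {ereal (geodist r a b) |a b.
               a \<in> (nu_W r \<circ> conf_map r f) ` V \<and> b \<in> (nu_W r \<circ> conf_map r f) ` V}"
            then obtain y z where yz: "y \<in> V" "z \<in> V"
              and e: "e = ereal (geodist r (nu_W r (conf_map r f y)) (nu_W r (conf_map r f z)))"
              by auto
            have yc: "y \<in> conf_simplex r N" and zc: "z \<in> conf_simplex r N"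
              using yz unfolding V_def by auto
            have "geodist r (nu_W r (conf_map r f y)) (nu_W r (conf_map r f z)) \<le> \<theta>"
              unfolding \<theta>_def
            proof (rule pair_bound[where a="\<lambda>i. f (y i)" and b="\<lambda>i. f (z i)"])
              show "0 < r" by (rule r0)
              show "0 < \<kappa>" by (rule k)
              show "0 \<le> d" by (rule d0)
              show "real r * \<kappa> \<le> sqrt (\<Sum>i<r. \<Sum>j<r. (norm (f (y i) - f (y j)))\<^sup>2)"
                using kappa_le[OF yc] r0 unfolding \<kappa>_def g_def by (simp add: field_simps)
              show "real r * \<kappa> \<le> sqrt (\<Sum>i<r. \<Sum>j<r. (norm (f (z i) - f (z j)))\<^sup>2)"
                using kappa_le[OF zc] r0 unfolding \<kappa>_def g_def by (simp add: field_simps)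
              fix i assume i: "i < r"
              have "y i \<in> Delta N \<inter> Op i" "z i \<in> Delta N \<inter> Op i"
                using yz i conf_Delta[OF yc i] conf_Delta[OF zc i] unfolding V_def by auto
              then show "norm (f (y i) - f (z i)) \<le> d" using Op[OF i] by (simp add: dist_norm)
            qed (simp_all add: conf_map_def)
            then show "e \<le> ereal \<theta>" using e by simp
          qed
          ultimately show ?thesis by blast
        qed
        define A where "A = delta_gen (top_of_set (conf_simplex r N)) (geodist r) (nu_W r \<circ> conf_map r f)"
        have Ale: "A \<le> ereal \<theta>"
          unfolding A_def delta_gen_def using nb th0 by (intro Inf_lower) auto
        have A0: "0 \<le> A"
          unfolding A_def delta_gen_def by (intro Inf_greatest) auto
        have aA: "\<alpha> = real_of_ereal A" unfolding \<alpha>_def alpha_r_def A_def by simp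
        have a0: "0 \<le> \<alpha>" and ale: "\<alpha> \<le> \<theta>" using Ale A0 unfolding aA
          by (cases A; auto)+
        have s1: "sin (\<alpha> / 2) \<le> sin (\<theta> / 2)"
          using a0 ale thpi by (intro sin_monotone_2pi_le) auto
        have "cos \<theta> = 1 - 2 * (sin (\<theta> / 2))\<^sup>2"
          using cos_double_sin[of "\<theta> / 2"] by simp
        moreover have "cos \<theta> = max (-1) (1 - d\<^sup>2 / \<kappa>\<^sup>2)"
          unfolding \<theta>_def using mx by simp
        ultimately have "2 * (sin (\<theta> / 2))\<^sup>2 \<le> d\<^sup>2 / \<kappa>\<^sup>2" by linarith
        hence "(sqrt 2 * sin (\<theta> / 2) * \<kappa>)\<^sup>2 \<le> d\<^sup>2"
          using k by (simp add: power_mult_distrib field_simps)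
        hence s2: "sqrt 2 * sin (\<theta> / 2) * \<kappa> \<le> d"
          using d0 by (rule power2_le_imp_le)
        have "R \<le> sqrt 2 * sin (\<theta> / 2) * \<kappa>"
          unfolding R_def using s1 k by (intro mult_right_mono mult_left_mono) auto
        then show ?thesis using s2 real by simp
      qed
    qed
  qed
  then show ?thesis unfolding dD R_def \<alpha>_def \<kappa>_def .
qed

end
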